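(* Let $(\mathbf{x}^1,y_l^1,y_r^1),\dots,(\mathbf{x}^T,y_l^T,y_r^T)$ be a sequence of examples with $\mathbf{x}^t\in\mathbb{R}^d$ and integers $1\le y_l^t\le y_r^t\le K$, and run the PA-II algorithm with parameter $C>0$ starting from $\mathbf{w}^1=\mathbf{0}$, $\boldsymbol\theta^1=\mathbf{0}$. Let $c=\min_{t\in[T]}(y_r^t-y_l^t)$, $R^2=\max_{t\in[T]}\Vert\mathbf{x}^t\Vert^2$, $D=1+\frac{1}{2C}+R^2(K-c-1)$, and let $\mathbf{v}=(\mathbf{u},\mathbf{b})$, $\mathbf{u}\in\mathbb{R}^d$, $\mathbf{b}\in\mathbb{R}^{K-1}$, be the parameters of an arbitrary predictor, $\Vert\mathbf{v}\Vert^2=\Vert\mathbf{u}\Vert^2+\Vert\mathbf{b}\Vert^2$. Then $$\sum_{t=1}^T\sum_{i=1}^{K-1}(l_i^t)^2\le D\left(\Vert\mathbf{v}\Vert^2+2C\sum_{t=1}^T\sum_{i=1}^{K-1}(l_i^{t*})^2\right).$$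
   Context: PA-II algorithm with parameter $C>0$: at trial $t$, with $I_t=\{1,\dots,y_l^t-1\}\cup\{y_r^t,\dots,K-1\}$, $(\mathbf{w}^{t+1},\boldsymbol\theta^{t+1})$ is the $(\mathbf{w},\boldsymbol\theta)$-part of the minimizer over $\mathbf{w},\boldsymbol\theta,(\xi_i)_{i\in I_t}$ of $\tfrac12\Vert\mathbf{w}-\mathbf{w}^t\Vert^2+\tfrac12\Vert\boldsymbol\theta-\boldsymbol\theta^t\Vert^2+C\sum_{i\in I_t}\xi_i^2$ subject to $\mathbf{w}\cdot\mathbf{x}^t-\theta_i\ge1-\xi_i$ ($i\le y_l^t-1$) and $\mathbf{w}\cdot\mathbf{x}^t-\theta_i\le-1+\xi_i$ ($i\ge y_r^t$). Losses of the algorithm: $l_i^t=\max(0,1+\theta_i^t-\mathbf{w}^t\cdot\mathbf{x}^t)$ for $1\le i\le y_l^t-1$, $l_i^t=\max(0,1+\mathbf{w}^t\cdot\mathbf{x}^t-\theta_i^t)$ for $y_r^t\le i\le K-1$, $l_i^t=0$ otherwise. Losses of the fixed predictor: $l_i^{t*}=\max(0,1-\mathbf{u}\cdot\mathbf{x}^t+b_i)$ for $1\le i\le y_l^t-1$, $l_i^{t*}=\max(0,1+\mathbf{u}\cdot\mathbf{x}^t-b_i)$ for $y_r^t\le i\le K-1$, $0$ otherwise. *)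

theory Defs
  imports "HOL-Analysis.Analysis"
begin

text \<open>Thresholds are represented as functions nat => real, meaningful on {1..K-1};
  the PA-II iterate is required to vanish outside {1..K-1}.\<close>

definition thr_sqnorm :: "nat \<Rightarrow> (nat \<Rightarrow> real) \<Rightarrow> real" where
  "thr_sqnorm K b = (\<Sum>i=1..K-1. (b i)^2)"

definition active_set :: "nat \<Rightarrow> nat \<Rightarrow> nat \<Rightarrow> nat set" where
  "active_set K yl yr = {1..yl-1} \<union> {yr..K-1}"

definition pa2_objective ::
  "real \<Rightarrow> nat \<Rightarrow> nat \<Rightarrow> nat \<Rightarrow> real^'d \<Rightarrow> (nat \<Rightarrow> real)
   \<Rightarrow> real^'d \<Rightarrow> (nat \<Rightarrow> real) \<Rightarrow> (nat \<Rightarrow> real) \<Rightarrow> real" where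
  "pa2_objective C K yl yr w0 th0 w th xi =
     (1/2) * (norm (w - w0))^2 + (1/2) * (\<Sum>i=1..K-1. (th i - th0 i)^2)
     + C * (\<Sum>i\<in>active_set K yl yr. (xi i)^2)"

definition pa2_feasible ::
  "nat \<Rightarrow> real^'d \<Rightarrow> nat \<Rightarrow> nat \<Rightarrow> real^'d \<Rightarrow> (nat \<Rightarrow> real) \<Rightarrow> (nat \<Rightarrow> real) \<Rightarrow> bool" where
  "pa2_feasible K x yl yr w th xi \<longleftrightarrow>
     (\<forall>i. i \<notin> {1..K-1} \<longrightarrow> th i = 0) \<and>
     (\<forall>i\<in>{1..yl-1}. w \<bullet> x - th i \<ge> 1 - xi i) \<and>
     (\<forall>i\<in>{yr..K-1}. w \<bullet> x - th i \<le> -1 + xi i)"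

definition pa2_is_update ::
  "real \<Rightarrow> nat \<Rightarrow> real^'d \<Rightarrow> nat \<Rightarrow> nat \<Rightarrow> real^'d \<Rightarrow> (nat \<Rightarrow> real)
   \<Rightarrow> real^'d \<Rightarrow> (nat \<Rightarrow> real) \<Rightarrow> bool" where
  "pa2_is_update C K x yl yr w0 th0 w th \<longleftrightarrow>
     (\<exists>xi. pa2_feasible K x yl yr w th xi \<and>
        (\<forall>w' th' xi'. pa2_feasible K x yl yr w' th' xi' \<longrightarrow>
           pa2_objective C K yl yr w0 th0 w th xi \<le> pa2_objective C K yl yr w0 th0 w' th' xi'))"

definition pa2_step ::
  "real \<Rightarrow> nat \<Rightarrow> real^'d \<Rightarrow> nat \<Rightarrow> nat \<Rightarrow> (real^'d) \<times> (nat \<Rightarrow> real) \<Rightarrow> (real^'d) \<times> (nat \<Rightarrow> real)" where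
  "pa2_step C K x yl yr s = (THE p. pa2_is_update C K x yl yr (fst s) (snd s) (fst p) (snd p))"

text \<open>pa2_run C K xs yl yr n = (w^{n+1}, theta^{n+1}); examples are indexed from 1.\<close>
primrec pa2_run ::
  "real \<Rightarrow> nat \<Rightarrow> (nat \<Rightarrow> real^'d) \<Rightarrow> (nat \<Rightarrow> nat) \<Rightarrow> (nat \<Rightarrow> nat) \<Rightarrow> nat
   \<Rightarrow> (real^'d) \<times> (nat \<Rightarrow> real)" where
  "pa2_run C K xs yl yr 0 = (0, \<lambda>_. 0)"
| "pa2_run C K xs yl yr (Suc n) =
     pa2_step C K (xs (Suc n)) (yl (Suc n)) (yr (Suc n)) (pa2_run C K xs yl yr n)"

definition ord_loss ::
  "nat \<Rightarrow> real^'d \<Rightarrow> nat \<Rightarrow> nat \<Rightarrow> real^'d \<Rightarrow> (nat \<Rightarrow> real) \<Rightarrow> nat \<Rightarrow> real" where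
  "ord_loss K x yl yr w th i =
     (if 1 \<le> i \<and> i \<le> yl - 1 then max 0 (1 + th i - w \<bullet> x)
      else if yr \<le> i \<and> i \<le> K - 1 then max 0 (1 + w \<bullet> x - th i)
      else 0)"

end

theory Submission
  imports Defs
begin

lemma norm_add_scale_sq:
  fixes a d :: "'a::real_inner"
  shows "(norm (a + s *\<^sub>R d))^2 = (norm a)^2 + 2* s *(a \<bullet> d) + s^2 * (norm d)^2"
  unfolding power2_norm_eq_inner by (simp add: inner_add_left inner_add_right inner_commute power2_eq_square algebra_simps)

lemma sum_add_scale_sq:
  "(\<Sum>i\<in>S. (a i + s * d i)^2::real) = (\<Sum>i\<in>S. (a i)^2) + 2* s *(\<Sum>i\<in>S. a i * d i) + s^2 * (\<Sum>i\<in>S. (d i)^2)"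
  by (simp add: power2_eq_square algebra_simps sum.distrib sum_distrib_left)

lemma obj_expand:
  "pa2_objective C K yl yr w0 th0 (w1 + s *\<^sub>R dw) (\<lambda>i. th1 i + s * dth i) (\<lambda>i. xi1 i + s * dxi i)
   = pa2_objective C K yl yr w0 th0 w1 th1 xi1
     + s * ((w1 - w0) \<bullet> dw + (\<Sum>i=1..K-1. (th1 i - th0 i) * dth i) + 2*C*(\<Sum>i\<in>active_set K yl yr. xi1 i * dxi i))
     + s^2/2 * ((norm dw)^2 + (\<Sum>i=1..K-1. (dth i)^2) + 2*C*(\<Sum>i\<in>active_set K yl yr. (dxi i)^2))"
proof -
  have A: "(norm (w1 + s *\<^sub>R dw - w0))^2 = (norm (w1-w0))^2 + 2* s *((w1-w0) \<bullet> dw) + s^2*(norm dw)^2"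
    using norm_add_scale_sq[of "w1-w0" s dw] by (simp add: algebra_simps)
  have B: "(\<Sum>i=1..K-1. (th1 i + s*dth i - th0 i)^2) = (\<Sum>i=1..K-1. (th1 i - th0 i)^2) + 2* s *(\<Sum>i=1..K-1. (th1 i - th0 i) * dth i) + s^2 * (\<Sum>i=1..K-1. (dth i)^2)"
    using sum_add_scale_sq[of "\<lambda>i. th1 i - th0 i" s dth] by (simp add: algebra_simps)
  have Cc: "(\<Sum>i\<in>active_set K yl yr. (xi1 i + s*dxi i)^2) = (\<Sum>i\<in>active_set K yl yr. (xi1 i)^2) + 2* s *(\<Sum>i\<in>active_set K yl yr. xi1 i * dxi i) + s^2 * (\<Sum>i\<in>active_set K yl yr. (dxi i)^2)"
    by (rule sum_add_scale_sq)
  show ?thesis unfolding pa2_objective_def A B Cc by (simp add: algebra_simps)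
qed

lemma feas_comb:
  assumes f1: "pa2_feasible K x yl yr w1 th1 xi1" and f2: "pa2_feasible K x yl yr w2 th2 xi2"
    and s: "0 \<le> s" "s \<le> 1"
  shows "pa2_feasible K x yl yr (w1 + s *\<^sub>R (w2 - w1)) (\<lambda>i. th1 i + s * (th2 i - th1 i)) (\<lambda>i. xi1 i + s * (xi2 i - xi1 i))"
proof -
  have e: "(w1 + s *\<^sub>R (w2 - w1)) \<bullet> x - (th1 i + s * (th2 i - th1 i)) = (1-s)*(w1 \<bullet> x - th1 i) + s*(w2 \<bullet> x - th2 i)" for i
    by (simp add: inner_add_left inner_diff_left algebra_simps)
  have L: "(w1 + s *\<^sub>R (w2 - w1)) \<bullet> x - (th1 i + s * (th2 i - th1 i)) \<ge> 1 - (xi1 i + s * (xi2 i - xi1 i))"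
    if "i \<in> {1..yl-1}" for i
  proof -
    have a: "w1 \<bullet> x - th1 i \<ge> 1 - xi1 i" "w2 \<bullet> x - th2 i \<ge> 1 - xi2 i"
      using f1 f2 that unfolding pa2_feasible_def by auto
    have "(1-s)*(1 - xi1 i) \<le> (1-s)*(w1 \<bullet> x - th1 i)" using a s by (intro mult_left_mono) auto
    moreover have "s*(1 - xi2 i) \<le> s*(w2 \<bullet> x - th2 i)" using a s by (intro mult_left_mono) auto
    ultimately show ?thesis unfolding e by (simp add: algebra_simps)
  qed
  have R: "(w1 + s *\<^sub>R (w2 - w1)) \<bullet> x - (th1 i + s * (th2 i - th1 i)) \<le> -1 + (xi1 i + s * (xi2 i - xi1 i))"
    if "i \<in> {yr..K-1}" for i
  proof -
    have a: "w1 \<bullet> x - th1 i \<le> -1 + xi1 i" "w2 \<bullet> x - th2 i \<le> -1 + xi2 i"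
      using f1 f2 that unfolding pa2_feasible_def by auto
    have "(1-s)*(w1 \<bullet> x - th1 i) \<le> (1-s)*(-1 + xi1 i)" using a s by (intro mult_left_mono) auto
    moreover have "s*(w2 \<bullet> x - th2 i) \<le> s*(-1 + xi2 i)" using a s by (intro mult_left_mono) auto
    ultimately show ?thesis unfolding e by (simp add: algebra_simps)
  qed
  show ?thesis using f1 f2 L R unfolding pa2_feasible_def by auto
qed

lemma obj_nonneg: "C > 0 \<Longrightarrow> 0 \<le> pa2_objective C K yl yr w0 th0 w th xi"
  unfolding pa2_objective_def by (intro add_nonneg_nonneg mult_nonneg_nonneg sum_nonneg) auto


lemma proj_ineq:
  assumes C: "C > 0"
    and f1: "pa2_feasible K x yl yr w1 th1 xi1"
    and opt: "\<forall>w' th' xi'. pa2_feasible K x yl yr w' th' xi' \<longrightarrow> pa2_objective C K yl yr w0 th0 w1 th1 xi1 \<le> pa2_objective C K yl yr w0 th0 w' th' xi'"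
    and f2: "pa2_feasible K x yl yr w2 th2 xi2"
  shows "pa2_objective C K yl yr w0 th0 w1 th1 xi1 + ((norm (w2 - w1))^2 + (\<Sum>i=1..K-1. (th2 i - th1 i)^2) + 2*C*(\<Sum>i\<in>active_set K yl yr. (xi2 i - xi1 i)^2))/2 \<le> pa2_objective C K yl yr w0 th0 w2 th2 xi2"
proof -
  define g where "g = (w1 - w0) \<bullet> (w2 - w1) + (\<Sum>i=1..K-1. (th1 i - th0 i) * (th2 i - th1 i)) + 2*C*(\<Sum>i\<in>active_set K yl yr. xi1 i * (xi2 i - xi1 i))"
  define h where "h = (norm (w2 - w1))^2 + (\<Sum>i=1..K-1. (th2 i - th1 i)^2) + 2*C*(\<Sum>i\<in>active_set K yl yr. (xi2 i - xi1 i)^2)"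
  let ?o1 = "pa2_objective C K yl yr w0 th0 w1 th1 xi1"
  have exp: "pa2_objective C K yl yr w0 th0 (w1 + s *\<^sub>R (w2 - w1)) (\<lambda>i. th1 i + s * (th2 i - th1 i)) (\<lambda>i. xi1 i + s * (xi2 i - xi1 i)) = ?o1 + s * g + s^2/2 * h" for s
    unfolding g_def h_def by (rule obj_expand)
  have h0: "h \<ge> 0" unfolding h_def using C by (auto intro!: add_nonneg_nonneg sum_nonneg mult_nonneg_nonneg)
  have key: "0 \<le> s * g + s^2/2 * h" if "0 < s" "s \<le> 1" for s
  proof -
    have "pa2_feasible K x yl yr (w1 + s *\<^sub>R (w2 - w1)) (\<lambda>i. th1 i + s * (th2 i - th1 i)) (\<lambda>i. xi1 i + s * (xi2 i - xi1 i))"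
      using feas_comb[OF f1 f2] that by auto
    then have "?o1 \<le> pa2_objective C K yl yr w0 th0 (w1 + s *\<^sub>R (w2 - w1)) (\<lambda>i. th1 i + s * (th2 i - th1 i)) (\<lambda>i. xi1 i + s * (xi2 i - xi1 i))"
      using opt by blast
    then show ?thesis using exp[of s] by simp
  qed
  have "g \<ge> 0"
  proof (rule ccontr)
    assume "\<not> g \<ge> 0" hence gn: "g < 0" by simp
    show False
    proof (cases "h = 0")
      case True then show False using key[of 1] gn by simp
    next
      case False
      hence hp: "h > 0" using h0 by simp
      define s where "s = min 1 (-g/h)"
      have s0: "0 < s" using gn hp by (simp add: s_def field_simps)
      have s1: "s \<le> 1" by (simp add: s_def)
      have "s \<le> -g/h" by (simp add: s_def)
      hence sh: "s * h \<le> -g" using hp by (simp add: field_simps)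
      have "g + s*h/2 < 0" using sh gn by linarith
      hence "s * (g + s*h/2) < 0" using s0 by (simp add: mult_pos_neg)
      moreover have "s*g + s^2/2*h = s*(g + s*h/2)" by (simp add: power2_eq_square algebra_simps)
      ultimately show False using key[OF s0 s1] by linarith
    qed
  qed
  then show ?thesis using exp[of 1] h0 unfolding h_def[symmetric] by simp
qed

lemma aux_zero:
  fixes o1 o2 X Y Z :: real
  assumes "o1 + (X+Y+Z)/2 \<le> o2" "o2 \<le> o1" "X\<ge>0" "Y\<ge>0" "Z\<ge>0"
  shows "X = 0 \<and> Y = 0"
proof -
  have "(X+Y+Z)/2 \<le> 0" using assms(1,2) by linarith
  hence "X+Y+Z \<le> 0" by simp
  thus ?thesis using assms(3-5) by auto
qed

lemma update_unique:
  assumes C: "C > 0" and u1: "pa2_is_update C K x yl yr w0 th0 w1 th1"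
    and u2: "pa2_is_update C K x yl yr w0 th0 w2 th2"
  shows "w1 = w2 \<and> th1 = th2"
proof -
  obtain xi1 where f1: "pa2_feasible K x yl yr w1 th1 xi1" and o1: "\<forall>w' th' xi'. pa2_feasible K x yl yr w' th' xi' \<longrightarrow> pa2_objective C K yl yr w0 th0 w1 th1 xi1 \<le> pa2_objective C K yl yr w0 th0 w' th' xi'"
    using u1 unfolding pa2_is_update_def by blast
  obtain xi2 where f2: "pa2_feasible K x yl yr w2 th2 xi2" and o2: "\<forall>w' th' xi'. pa2_feasible K x yl yr w' th' xi' \<longrightarrow> pa2_objective C K yl yr w0 th0 w2 th2 xi2 \<le> pa2_objective C K yl yr w0 th0 w' th' xi'"
    using u2 unfolding pa2_is_update_def by blast
  have p: "pa2_objective C K yl yr w0 th0 w1 th1 xi1 + ((norm (w2 - w1))^2 + (\<Sum>i=1..K-1. (th2 i - th1 i)^2) + 2*C*(\<Sum>i\<in>active_set K yl yr. (xi2 i - xi1 i)^2))/2 \<le> pa2_objective C K yl yr w0 th0 w2 th2 xi2"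
    by (rule proj_ineq[OF C f1 o1 f2])
  have q: "pa2_objective C K yl yr w0 th0 w2 th2 xi2 \<le> pa2_objective C K yl yr w0 th0 w1 th1 xi1"
    using o2 f1 by blast
  have a: "(norm (w2 - w1))^2 \<ge> 0" by simp
  have b: "(\<Sum>i=1..K-1. (th2 i - th1 i)^2) \<ge> 0" by (simp add: sum_nonneg)
  have c: "2*C*(\<Sum>i\<in>active_set K yl yr. (xi2 i - xi1 i)^2) \<ge> 0" using C by (simp add: sum_nonneg)
  have nw: "(norm (w2 - w1))^2 = 0" and nt: "(\<Sum>i=1..K-1. (th2 i - th1 i)^2) = 0"
    using aux_zero[OF p q a b c] by auto
  from nw have "w1 = w2" by simp
  moreover have "th1 = th2"
  proof
    fix i
    show "th1 i = th2 i"
    proof (cases "i \<in> {1..K-1}")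
      case True
      then show ?thesis using nt by (subst (asm) sum_nonneg_eq_0_iff) auto
    next
      case False
      then show ?thesis using f1 f2 unfolding pa2_feasible_def by auto
    qed
  qed
  ultimately show ?thesis by simp
qed


lemma kappa_ineq:
  fixes C G e z :: real
  assumes C: "C > 0" and G: "G \<le> e + z"
  shows "(2*C/(2*C+1))/2 * (max 0 G)^2 \<le> e^2/2 + C*z^2"
proof -
  have m: "(max 0 G)^2 \<le> (e+z)^2"
  proof (cases "G \<le> 0")
    case True then show ?thesis by simp
  next
    case False then show ?thesis using G by (intro power_mono) auto
  qed
  have sq: "0 \<le> (e - 2*C*z)^2" by simp
  have "(2*C) * (e+z)^2 \<le> (2*C+1) * (e^2 + 2*C*z^2)"
    using sq by (simp add: power2_eq_square algebra_simps)
  hence "(2*C/(2*C+1)) * (e+z)^2 \<le> e^2 + 2*C*z^2"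
    using C by (simp add: field_simps)
  moreover have "(2*C/(2*C+1)) * (max 0 G)^2 \<le> (2*C/(2*C+1)) * (e+z)^2"
    using m C by (intro mult_left_mono) auto
  ultimately have "(2*C/(2*C+1)) * (max 0 G)^2 \<le> e^2 + 2*C*z^2" by (meson order_trans)
  then have "((2*C/(2*C+1)) * (max 0 G)^2)/2 \<le> (e^2 + 2*C*z^2)/2" by (rule divide_right_mono) simp
  moreover have "(2*C/(2*C+1))/2 * (max 0 G)^2 = ((2*C/(2*C+1)) * (max 0 G)^2)/2" by simp
  moreover have "e^2/2 + C*z^2 = (e^2 + 2*C*z^2)/2" by simp
  ultimately show ?thesis by simp
qed

lemma kappa_id:
  fixes C :: real
  assumes C: "C > 0"
  shows "(2*C/(2*C+1))^2/2 + C*(1 - 2*C/(2*C+1))^2 = (2*C/(2*C+1))/2"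
proof -
  define t where "t = 2*C+1"
  have t: "t > 0" using C by (simp add: t_def)
  have k: "1 - 2*C/t = 1/t" using t by (simp add: field_simps t_def)
  have "(2*C/t)^2/2 + C*(1/t)^2 = (2*C^2 + C)/t^2" using t by (simp add: field_simps power2_eq_square)
  also have "2*C^2 + C = C * t" by (simp add: t_def algebra_simps power2_eq_square)
  also have "C*t/t^2 = (2*C/t)/2" using t by (simp add: power2_eq_square)
  finally show ?thesis unfolding t_def[symmetric] k .
qed

lemma active_sub: "1 \<le> yr \<Longrightarrow> yl \<le> K \<Longrightarrow> active_set K yl yr \<subseteq> {1..K-1}"
  unfolding active_set_def by auto

lemma exists_update:
  fixes x w0 :: "real^'d"
  assumes C: "C > 0" and y: "1 \<le> yl" "yl \<le> yr" "yr \<le> K"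
  shows "\<exists>w th. pa2_is_update C K x yl yr w0 th0 w th"
proof -
  define A where "A = active_set K yl yr"
  define L where "L = {1..yl-1}"
  define sg where "sg i = (if i \<in> L then 1 else -1::real)" for i
  define m where "m i = 1 - sg i * (w0 \<bullet> x - th0 i)" for i
  define r2 where "r2 = x \<bullet> x"
  define \<kappa> where "\<kappa> = 2*C/(2*C+1)"
  define \<psi> where "\<psi> \<delta> = (if r2 = 0 then 0 else \<delta>^2/(2*r2)) + (\<Sum>i\<in>A. \<kappa>/2 * (max 0 (m i - sg i * \<delta>))^2)" for \<delta>
  have finA: "finite A" unfolding A_def active_set_def by auto
  have AK: "A \<subseteq> {1..K-1}" unfolding A_def using y by (intro active_sub) auto
  have AR: "i \<in> A \<Longrightarrow> i \<notin> L \<Longrightarrow> i \<in> {yr..K-1}" for i unfolding A_def active_set_def L_def by auto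
  have RL: "i \<in> {yr..K-1} \<Longrightarrow> i \<notin> L" for i unfolding L_def using y by auto
  have kap0: "0 \<le> \<kappa>" using C by (simp add: \<kappa>_def)
  have r20: "r2 \<ge> 0" unfolding r2_def by simp
  have r2n: "r2 = (norm x)^2" unfolding r2_def by (simp add: power2_norm_eq_inner)
  have lb: "\<psi> ((w - w0) \<bullet> x) \<le> pa2_objective C K yl yr w0 th0 w th xi"
    if f: "pa2_feasible K x yl yr w th xi" for w th xi
  proof -
    define \<delta> where "\<delta> = (w - w0) \<bullet> x"
    have p1: "(if r2 = 0 then 0 else \<delta>^2/(2*r2)) \<le> (norm (w - w0))^2/2"
    proof (cases "r2 = 0")
      case True then show ?thesis by simp
    next
      case False
      hence rp: "r2 > 0" using r20 by simp
      have "\<bar>\<delta>\<bar> \<le> norm (w - w0) * norm x" unfolding \<delta>_def by (rule Cauchy_Schwarz_ineq2)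
      hence "\<delta>^2 \<le> (norm (w - w0) * norm x)^2"
        by (metis abs_ge_zero power2_abs power_mono)
      hence "\<delta>^2 \<le> (norm (w - w0))^2 * r2" by (simp add: r2n power_mult_distrib)
      then show ?thesis using rp False by (simp add: field_simps)
    qed
    have p2: "(\<Sum>i\<in>A. (th i - th0 i)^2) \<le> (\<Sum>i=1..K-1. (th i - th0 i)^2)"
      by (rule sum_mono2[OF _ AK]) auto
    have p3: "\<kappa>/2 * (max 0 (m i - sg i * \<delta>))^2 \<le> (th i - th0 i)^2/2 + C*(xi i)^2" if iA: "i \<in> A" for i
    proof -
      have c: "sg i * (w \<bullet> x - th i) \<ge> 1 - xi i"
      proof (cases "i \<in> L")
        case True then show ?thesis using f unfolding pa2_feasible_def sg_def L_def by auto
      next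
        case False
        have "w \<bullet> x - th i \<le> -1 + xi i" using f AR[OF iA False] unfolding pa2_feasible_def by blast
        then show ?thesis using False unfolding sg_def by simp
      qed
      have wx: "w \<bullet> x = w0 \<bullet> x + \<delta>" unfolding \<delta>_def by (simp add: inner_diff_left)
      have sg2: "(sg i)^2 = 1" unfolding sg_def by simp
      have G: "m i - sg i * \<delta> \<le> (- sg i * (th i - th0 i)) + xi i"
        using c unfolding m_def wx by (simp add: algebra_simps)
      have "\<kappa>/2 * (max 0 (m i - sg i * \<delta>))^2 \<le> (- sg i * (th i - th0 i))^2/2 + C*(xi i)^2"
        unfolding \<kappa>_def by (rule kappa_ineq[OF C G])
      also have "(- sg i * (th i - th0 i))^2 = (th i - th0 i)^2"
        using sg2 by (simp add: power_mult_distrib)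
      finally show ?thesis .
    qed
    have "\<psi> \<delta> \<le> (norm (w - w0))^2/2 + (\<Sum>i\<in>A. (th i - th0 i)^2/2 + C*(xi i)^2)"
    proof -
      have s3: "(\<Sum>i\<in>A. \<kappa>/2 * (max 0 (m i - sg i * \<delta>))^2) \<le> (\<Sum>i\<in>A. (th i - th0 i)^2/2 + C*(xi i)^2)"
        by (rule sum_mono) (rule p3)
      show ?thesis unfolding \<psi>_def using p1 s3 by linarith
    qed
    also have "\<dots> = (norm (w - w0))^2/2 + (\<Sum>i\<in>A. (th i - th0 i)^2)/2 + C*(\<Sum>i\<in>A. (xi i)^2)"
      by (simp add: sum.distrib sum_distrib_left sum_divide_distrib)
    also have "\<dots> \<le> pa2_objective C K yl yr w0 th0 w th xi"
      unfolding pa2_objective_def A_def[symmetric] using p2 by simp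
    finally show ?thesis unfolding \<delta>_def .
  qed
  obtain \<delta>s where \<delta>s0: "r2 = 0 \<Longrightarrow> \<delta>s = 0" and \<delta>smin: "\<And>\<delta>. r2 \<noteq> 0 \<Longrightarrow> \<psi> \<delta>s \<le> \<psi> \<delta>"
  proof (cases "r2 = 0")
    case True then show ?thesis using that by blast
  next
    case False
    hence rp: "r2 > 0" using r20 by simp
    define M where "M = 2*r2*\<psi> 0 + 1"
    have psi0: "\<psi> 0 \<ge> 0" unfolding \<psi>_def using kap0 by (auto intro!: sum_nonneg)
    have M1: "M \<ge> 1" unfolding M_def using rp psi0 by simp
    have peq: "\<psi> = (\<lambda>\<delta>. \<delta>^2/(2*r2) + (\<Sum>i\<in>A. \<kappa>/2 * (max 0 (m i - sg i * \<delta>))^2))"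
      using False by (simp add: \<psi>_def fun_eq_iff)
    have cont: "continuous_on {-M..M} \<psi>" unfolding peq using rp by (intro continuous_intros) auto
    obtain d where d: "d \<in> {-M..M}" and dmin: "\<forall>y\<in>{-M..M}. \<psi> d \<le> \<psi> y"
      using continuous_attains_inf[OF compact_Icc _ cont] M1 by auto
    have "\<psi> d \<le> \<psi> \<delta>" for \<delta>
    proof (cases "\<delta> \<in> {-M..M}")
      case True then show ?thesis using dmin by auto
    next
      case False
      hence ab: "\<bar>\<delta>\<bar> > M" by auto
      have "\<delta>^2 = \<bar>\<delta>\<bar> * \<bar>\<delta>\<bar>" by (simp add: power2_eq_square)
      also have "\<dots> \<ge> \<bar>\<delta>\<bar> * 1" using ab M1 by (intro mult_left_mono) auto
      finally have "\<delta>^2 > 2*r2*\<psi> 0" using ab unfolding M_def by linarith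
      hence "\<delta>^2/(2*r2) > \<psi> 0" using rp by (simp add: field_simps)
      moreover have "\<delta>^2/(2*r2) \<le> \<psi> \<delta>" unfolding peq using kap0 by (auto intro!: sum_nonneg)
      moreover have "\<psi> d \<le> \<psi> 0" using dmin M1 by auto
      ultimately show ?thesis by linarith
    qed
    then show ?thesis using that[of d] False by blast
  qed
  define g where "g i = max 0 (m i - sg i * \<delta>s)" for i
  define wc where "wc = w0 + (\<delta>s / r2) *\<^sub>R x"
  define thc where "thc i = (if i \<in> A then th0 i - sg i * \<kappa> * g i else if i \<in> {1..K-1} then th0 i else 0)" for i
  define xic where "xic i = (1-\<kappa>) * g i" for i
  have wcx: "(wc - w0) \<bullet> x = \<delta>s"
    using \<delta>s0 unfolding wc_def by (cases "r2 = 0") (auto simp: r2_def)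
  have wcx': "wc \<bullet> x = w0 \<bullet> x + \<delta>s" using wcx by (simp add: inner_diff_left)
  have feas: "pa2_feasible K x yl yr wc thc xic"
    unfolding pa2_feasible_def
  proof (intro conjI ballI allI impI)
    fix i assume "i \<notin> {1..K-1}"
    then show "thc i = 0" using AK unfolding thc_def by auto
  next
    fix i assume i: "i \<in> {1..yl-1}"
    hence iA: "i \<in> A" and iL: "i \<in> L" unfolding A_def active_set_def L_def by auto
    have "g i \<ge> m i - \<delta>s" unfolding g_def using iL sg_def by simp
    then show "wc \<bullet> x - thc i \<ge> 1 - xic i"
      unfolding thc_def xic_def wcx' m_def sg_def using iA iL by (simp add: algebra_simps)
  next
    fix i assume i: "i \<in> {yr..K-1}"
    hence iA: "i \<in> A" and iL: "i \<notin> L" using RL unfolding A_def active_set_def by auto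
    have "g i \<ge> m i + \<delta>s" unfolding g_def using iL sg_def by simp
    then show "wc \<bullet> x - thc i \<le> -1 + xic i"
      unfolding thc_def xic_def wcx' m_def sg_def using iA iL by (simp add: algebra_simps)
  qed
  have objc: "pa2_objective C K yl yr w0 th0 wc thc xic = \<psi> \<delta>s"
  proof -
    have o1: "(norm (wc - w0))^2/2 = (if r2 = 0 then 0 else \<delta>s^2/(2*r2))"
    proof (cases "r2 = 0")
      case True then show ?thesis using \<delta>s0 unfolding wc_def by simp
    next
      case False
      have "wc - w0 = (\<delta>s/r2) *\<^sub>R x" by (simp add: wc_def)
      hence "(norm (wc - w0))^2 = (\<delta>s/r2)^2 * r2"
        unfolding r2n by (simp only: norm_scaleR power_mult_distrib power2_abs)
      then show ?thesis using False by (simp add: power2_eq_square field_simps)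
    qed
    have o2: "(\<Sum>i=1..K-1. (thc i - th0 i)^2) = (\<Sum>i\<in>A. \<kappa>^2 * (g i)^2)"
    proof -
      have "(\<Sum>i=1..K-1. (thc i - th0 i)^2) = (\<Sum>i\<in>A. (thc i - th0 i)^2)"
        by (rule sum.mono_neutral_right[OF _ AK]) (auto simp: thc_def)
      also have "\<dots> = (\<Sum>i\<in>A. \<kappa>^2 * (g i)^2)"
        by (rule sum.cong) (auto simp: thc_def sg_def power2_eq_square)
      finally show ?thesis .
    qed
    have o3: "(\<Sum>i\<in>A. (xic i)^2) = (\<Sum>i\<in>A. (1-\<kappa>)^2 * (g i)^2)"
      unfolding xic_def by (simp add: power_mult_distrib)
    have kid: "\<kappa>^2/2 + C*(1-\<kappa>)^2 = \<kappa>/2" unfolding \<kappa>_def by (rule kappa_id[OF C])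
    have "pa2_objective C K yl yr w0 th0 wc thc xic = (if r2 = 0 then 0 else \<delta>s^2/(2*r2)) + (\<Sum>i\<in>A. (\<kappa>^2/2 + C*(1-\<kappa>)^2) * (g i)^2)"
      unfolding pa2_objective_def A_def[symmetric] o2 o3 using o1
      by (simp add: sum.distrib sum_distrib_left sum_divide_distrib algebra_simps)
    also have "\<dots> = \<psi> \<delta>s" unfolding kid \<psi>_def g_def by simp
    finally show ?thesis .
  qed
  have "pa2_is_update C K x yl yr w0 th0 wc thc"
    unfolding pa2_is_update_def
  proof (intro exI conjI allI impI)
    show "pa2_feasible K x yl yr wc thc xic" by (rule feas)
  next
    fix w' th' xi' assume f': "pa2_feasible K x yl yr w' th' xi'"
    have "\<psi> \<delta>s \<le> \<psi> ((w' - w0) \<bullet> x)"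
    proof (cases "r2 = 0")
      case True
      hence "x = 0" unfolding r2_def by simp
      then show ?thesis using \<delta>s0 True by simp
    next
      case False then show ?thesis by (rule \<delta>smin)
    qed
    then show "pa2_objective C K yl yr w0 th0 wc thc xic \<le> pa2_objective C K yl yr w0 th0 w' th' xi'"
      using objc lb[OF f'] by linarith
  qed
  then show ?thesis by blast
qed

lemma pair_ineq:
  fixes a b \<alpha> \<beta> :: real
  assumes "\<alpha> > 0" "\<beta> > 0"
  shows "2*a*b \<le> \<beta>*a^2/\<alpha> + \<alpha>*b^2/\<beta>"
proof -
  have "0 \<le> (\<beta>*a - \<alpha>*b)^2" by simp
  hence "2*a*b*(\<alpha>*\<beta>) \<le> \<beta>^2*a^2 + \<alpha>^2*b^2" by (simp add: power2_eq_square algebra_simps)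
  hence "2*a*b \<le> (\<beta>^2*a^2 + \<alpha>^2*b^2)/(\<alpha>*\<beta>)" using assms by (simp add: field_simps)
  also have "\<dots> = \<beta>*a^2/\<alpha> + \<alpha>*b^2/\<beta>" using assms by (simp add: field_simps power2_eq_square)
  finally show ?thesis .
qed

lemma cs2:
  fixes a b \<alpha> \<beta> :: real
  assumes "\<alpha> > 0" "\<beta> > 0"
  shows "(a+b)^2 \<le> (\<alpha>+\<beta>)*(a^2/\<alpha> + b^2/\<beta>)"
proof -
  have e: "(\<alpha>+\<beta>)*(a^2/\<alpha> + b^2/\<beta>) = a^2 + b^2 + (\<beta>*a^2/\<alpha> + \<alpha>*b^2/\<beta>)"
    using assms by (simp add: field_simps)
  show ?thesis unfolding e using pair_ineq[OF assms, of a b] by (simp add: power2_eq_square algebra_simps)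
qed

lemma cs3:
  fixes a b c \<alpha> \<beta> \<gamma> :: real
  assumes "\<alpha> > 0" "\<beta> > 0" "\<gamma> > 0"
  shows "(a+b+c)^2 \<le> (\<alpha>+\<beta>+\<gamma>)*(a^2/\<alpha> + b^2/\<beta> + c^2/\<gamma>)"
proof -
  have e: "(\<alpha>+\<beta>+\<gamma>)*(a^2/\<alpha> + b^2/\<beta> + c^2/\<gamma>) = a^2 + b^2 + c^2 + (\<beta>*a^2/\<alpha> + \<alpha>*b^2/\<beta>) + (\<gamma>*a^2/\<alpha> + \<alpha>*c^2/\<gamma>) + (\<gamma>*b^2/\<beta> + \<beta>*c^2/\<gamma>)"
    using assms by (simp add: field_simps)
  have p1: "2*a*b \<le> \<beta>*a^2/\<alpha> + \<alpha>*b^2/\<beta>" using pair_ineq assms by simp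
  have p2: "2*a*c \<le> \<gamma>*a^2/\<alpha> + \<alpha>*c^2/\<gamma>" using pair_ineq assms by simp
  have p3: "2*b*c \<le> \<gamma>*b^2/\<beta> + \<beta>*c^2/\<gamma>" using pair_ineq assms by simp
  have "(a+b+c)^2 = a^2 + b^2 + c^2 + 2*a*b + 2*a*c + 2*b*c" by (simp add: power2_eq_square algebra_simps)
  then show ?thesis unfolding e using p1 p2 p3 by linarith
qed

lemma ord_loss_le:
  assumes f: "pa2_feasible K x yl yr w th xi"
  shows "ord_loss K x yl yr w0 th0 i \<le> norm (w - w0) * norm x + \<bar>th i - th0 i\<bar> + \<bar>xi i\<bar>"
proof -
  have cs: "\<bar>(w - w0) \<bullet> x\<bar> \<le> norm (w - w0) * norm x" by (rule Cauchy_Schwarz_ineq2)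
  have wx: "w \<bullet> x = w0 \<bullet> x + (w - w0) \<bullet> x" by (simp add: inner_diff_left)
  show ?thesis
  proof (cases "1 \<le> i \<and> i \<le> yl - 1")
    case True
    hence "w \<bullet> x - th i \<ge> 1 - xi i" using f unfolding pa2_feasible_def by auto
    then show ?thesis using True cs unfolding ord_loss_def wx by auto
  next
    case F1: False
    show ?thesis
    proof (cases "yr \<le> i \<and> i \<le> K - 1")
      case True
      hence "w \<bullet> x - th i \<le> -1 + xi i" using f unfolding pa2_feasible_def by auto
      then show ?thesis using F1 True cs unfolding ord_loss_def wx by auto
    next
      case False
      then show ?thesis using F1 unfolding ord_loss_def by auto
    qed
  qed
qed

lemma ord_loss_nonneg: "0 \<le> ord_loss K x yl yr w th i"
  unfolding ord_loss_def by auto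

lemma ord_loss_sum_active:
  assumes "1 \<le> yr" "yl \<le> K"
  shows "(\<Sum>i=1..K-1. (ord_loss K x yl yr w th i)^2) = (\<Sum>i\<in>active_set K yl yr. (ord_loss K x yl yr w th i)^2)"
  by (rule sum.mono_neutral_right[OF _ active_sub[OF assms]]) (auto simp: ord_loss_def active_set_def)

lemma card_active:
  assumes "1 \<le> yl" "yl \<le> yr" "yr \<le> K"
  shows "card (active_set K yl yr) + (yr - yl) + 1 \<le> K"
proof -
  have "card (active_set K yl yr) \<le> card {1..yl-1} + card {yr..K-1}"
    unfolding active_set_def by (rule card_Un_le)
  also have "\<dots> = (yl - 1) + (K - yr)" using assms by simp
  finally show ?thesis using assms by linarith
qed

lemma loss_bound:
  assumes C: "C > 0" and y: "1 \<le> yr" "yl \<le> K" and f: "pa2_feasible K x yl yr w th xi"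
  shows "(\<Sum>i=1..K-1. (ord_loss K x yl yr w0 th0 i)^2)
     \<le> (1 + 1/(2*C) + (norm x)^2 * real (card (active_set K yl yr))) * (2 * pa2_objective C K yl yr w0 th0 w th xi)"
proof -
  define A where "A = active_set K yl yr"
  define n where "n = card A"
  define W where "W = norm (w - w0)"
  define r where "r = norm x"
  define Dt where "Dt = 1 + 1/(2*C) + r^2 * real n"
  have finA: "finite A" unfolding A_def active_set_def by auto
  have AK: "A \<subseteq> {1..K-1}" unfolding A_def using y by (intro active_sub) auto
  have obj0: "0 \<le> pa2_objective C K yl yr w0 th0 w th xi" by (rule obj_nonneg[OF C])
  have Dt0: "Dt > 0" unfolding Dt_def using C by (simp add: add_pos_nonneg)
  have S1: "(\<Sum>i=1..K-1. (ord_loss K x yl yr w0 th0 i)^2) = (\<Sum>i\<in>A. (ord_loss K x yl yr w0 th0 i)^2)"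
    unfolding A_def by (rule ord_loss_sum_active[OF y])
  show ?thesis
  proof (cases "n = 0")
    case True
    hence "A = {}" using finA unfolding n_def by simp
    then show ?thesis unfolding S1 using Dt0 obj0 unfolding Dt_def r_def n_def A_def by simp
  next
    case False
    hence np: "real n > 0" by simp
    have per: "(ord_loss K x yl yr w0 th0 i)^2 \<le> Dt * (W^2/n + (th i - th0 i)^2 + 2*C*(xi i)^2)" for i
    proof -
      define e where "e = \<bar>th i - th0 i\<bar>"
      define z where "z = \<bar>xi i\<bar>"
      have l: "(ord_loss K x yl yr w0 th0 i)^2 \<le> (W*r + e + z)^2"
        using ord_loss_le[OF f, of w0 th0 i] ord_loss_nonneg[of K x yl yr w0 th0 i]
        unfolding W_def r_def e_def z_def by (intro power_mono) auto
      have e2: "e^2 = (th i - th0 i)^2" "z^2 = (xi i)^2" unfolding e_def z_def by simp_all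
      have g: "z^2/(1/(2*C)) = 2*C*z^2" using C by simp
      have "(W*r + e + z)^2 \<le> Dt * (W^2/n + e^2 + 2*C*z^2)"
      proof (cases "r = 0")
        case True
        have "(e + z)^2 \<le> (1 + 1/(2*C)) * (e^2/1 + z^2/(1/(2*C)))"
          by (rule cs2) (use C in auto)
        also have "\<dots> \<le> (1 + 1/(2*C)) * (W^2/n + e^2 + 2*C*z^2)"
          unfolding g using C np by (intro mult_left_mono) auto
        also have "\<dots> = Dt * (W^2/n + e^2 + 2*C*z^2)"
          unfolding Dt_def using True by simp
        finally show ?thesis using True by simp
      next
        case False
        hence rp: "r > 0" unfolding r_def by simp
        have "(W*r + e + z)^2 \<le> (r^2*n + 1 + 1/(2*C)) * ((W*r)^2/(r^2*n) + e^2/1 + z^2/(1/(2*C)))"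
          by (rule cs3) (use C rp np in auto)
        also have "(W*r)^2/(r^2*n) = W^2/n" using rp by (simp add: power_mult_distrib)
        finally show ?thesis unfolding Dt_def g by (simp add: algebra_simps)
      qed
      then show ?thesis using l e2 by simp
    qed
    have "(\<Sum>i\<in>A. (ord_loss K x yl yr w0 th0 i)^2) \<le> (\<Sum>i\<in>A. Dt * (W^2/n + (th i - th0 i)^2 + 2*C*(xi i)^2))"
      by (rule sum_mono) (rule per)
    also have "\<dots> = Dt * (W^2 + (\<Sum>i\<in>A. (th i - th0 i)^2) + 2*C*(\<Sum>i\<in>A. (xi i)^2))"
    proof -
      have "(\<Sum>i\<in>A. W^2/n + (th i - th0 i)^2 + 2*C*(xi i)^2) = (\<Sum>i\<in>A. W^2/n) + (\<Sum>i\<in>A. (th i - th0 i)^2) + (\<Sum>i\<in>A. 2*C*(xi i)^2)"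
        by (simp add: sum.distrib)
      also have "(\<Sum>i\<in>A. W^2/n) = W^2" using np unfolding n_def by simp
      also have "(\<Sum>i\<in>A. 2*C*(xi i)^2) = 2*C*(\<Sum>i\<in>A. (xi i)^2)" by (simp add: sum_distrib_left)
      finally have "(\<Sum>i\<in>A. W^2/n + (th i - th0 i)^2 + 2*C*(xi i)^2) = W^2 + (\<Sum>i\<in>A. (th i - th0 i)^2) + 2*C*(\<Sum>i\<in>A. (xi i)^2)" .
      then show ?thesis by (simp add: sum_distrib_left[symmetric])
    qed
    also have "\<dots> \<le> Dt * (2 * pa2_objective C K yl yr w0 th0 w th xi)"
    proof (rule mult_left_mono)
      have "(\<Sum>i\<in>A. (th i - th0 i)^2) \<le> (\<Sum>i=1..K-1. (th i - th0 i)^2)"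
        by (rule sum_mono2[OF _ AK]) auto
      then show "W^2 + (\<Sum>i\<in>A. (th i - th0 i)^2) + 2*C*(\<Sum>i\<in>A. (xi i)^2) \<le> 2 * pa2_objective C K yl yr w0 th0 w th xi"
        unfolding pa2_objective_def W_def A_def by simp
    qed (use Dt0 in simp)
    finally show ?thesis unfolding S1 Dt_def r_def n_def A_def by (simp add: algebra_simps)
  qed
qed


lemma lin_aux:
  fixes p1 A B X P Q C S :: real
  assumes "p1 + (A + B + X)/2 \<le> P/2 + Q/2 + C*S" "0 \<le> X"
  shows "2 * p1 \<le> P + Q - A - B + 2*C*S"
proof -
  have "2 * p1 + (A+B+X) \<le> P + Q + 2*(C*S)" using assms(1) by (simp add: field_simps)
  then show ?thesis using assms(2) by (simp add: algebra_simps)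
qed

lemma step_is_update:
  assumes C: "C > 0" and y: "1 \<le> yl" "yl \<le> yr" "yr \<le> K"
  shows "pa2_is_update C K x yl yr (fst s) (snd s) (fst (pa2_step C K x yl yr s)) (snd (pa2_step C K x yl yr s))"
proof -
  obtain w th where u: "pa2_is_update C K x yl yr (fst s) (snd s) w th"
    using exists_update[OF C y] by blast
  let ?P = "\<lambda>p. pa2_is_update C K x yl yr (fst s) (snd s) (fst p) (snd p)"
  have "?P (THE p. ?P p)"
  proof (rule theI[where a = "(w, th)"])
    show "?P (w, th)" using u by simp
  next
    fix p assume "?P p"
    then have "fst p = w \<and> snd p = th" using update_unique[OF C _ u] by blast
    then show "p = (w, th)" by (simp add: prod_eq_iff)
  qed
  then show ?thesis unfolding pa2_step_def by simp
qed

lemma step_bound: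
  fixes x w0 w1 u :: "real^'d"
  assumes C: "C > 0" and y: "1 \<le> yl" "yl \<le> yr" "yr \<le> K"
    and u1: "pa2_is_update C K x yl yr w0 th0 w1 th1"
  shows "\<exists>q. 0 \<le> q \<and> (\<Sum>i=1..K-1. (ord_loss K x yl yr w0 th0 i)^2) \<le> (1 + 1/(2*C) + (norm x)^2 * real (card (active_set K yl yr))) * q
     \<and> q \<le> (norm (w0 - u))^2 + (\<Sum>i=1..K-1. (th0 i - b i)^2) - (norm (w1 - u))^2 - (\<Sum>i=1..K-1. (th1 i - b i)^2)
            + 2*C*(\<Sum>i=1..K-1. (ord_loss K x yl yr u b i)^2)"
proof -
  obtain xi1 where f1: "pa2_feasible K x yl yr w1 th1 xi1" and o1: "\<forall>w' th' xi'. pa2_feasible K x yl yr w' th' xi' \<longrightarrow> pa2_objective C K yl yr w0 th0 w1 th1 xi1 \<le> pa2_objective C K yl yr w0 th0 w' th' xi'"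
    using u1 unfolding pa2_is_update_def by blast
  define thb where "thb i = (if i \<in> {1..K-1} then b i else 0)" for i
  define xib where "xib i = ord_loss K x yl yr u b i" for i
  have fb: "pa2_feasible K x yl yr u thb xib"
    unfolding pa2_feasible_def
  proof (intro conjI ballI allI impI)
    fix i assume "i \<notin> {1..K-1}" then show "thb i = 0" unfolding thb_def by presburger
  next
    fix i assume i: "i \<in> {1..yl-1}"
    hence "thb i = b i" using y by (auto simp: thb_def)
    then show "u \<bullet> x - thb i \<ge> 1 - xib i" using i unfolding xib_def ord_loss_def by auto
  next
    fix i assume i: "i \<in> {yr..K-1}"
    hence "thb i = b i" using y by (auto simp: thb_def)
    moreover have "\<not> (1 \<le> i \<and> i \<le> yl - 1)" using i y by auto
    ultimately show "u \<bullet> x - thb i \<le> -1 + xib i" using i unfolding xib_def ord_loss_def by auto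
  qed
  let ?o1 = "pa2_objective C K yl yr w0 th0 w1 th1 xi1"
  have p: "?o1 + ((norm (u - w1))^2 + (\<Sum>i=1..K-1. (thb i - th1 i)^2) + 2*C*(\<Sum>i\<in>active_set K yl yr. (xib i - xi1 i)^2))/2 \<le> pa2_objective C K yl yr w0 th0 u thb xib"
    by (rule proj_ineq[OF C f1 o1 fb])
  have s1: "(\<Sum>i=1..K-1. (thb i - th1 i)^2) = (\<Sum>i=1..K-1. (th1 i - b i)^2)"
    by (rule sum.cong) (auto simp: thb_def power2_commute)
  have s2: "(\<Sum>i=1..K-1. (thb i - th0 i)^2) = (\<Sum>i=1..K-1. (th0 i - b i)^2)"
    by (rule sum.cong) (auto simp: thb_def power2_commute)
  have s3: "(\<Sum>i\<in>active_set K yl yr. (xib i)^2) = (\<Sum>i=1..K-1. (ord_loss K x yl yr u b i)^2)"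
    unfolding xib_def using y by (intro ord_loss_sum_active[symmetric]) auto
  have ob: "pa2_objective C K yl yr w0 th0 u thb xib = (norm (w0 - u))^2/2 + (\<Sum>i=1..K-1. (th0 i - b i)^2)/2 + C*(\<Sum>i=1..K-1. (ord_loss K x yl yr u b i)^2)"
    unfolding pa2_objective_def s2 s3 by (simp add: norm_minus_commute)
  have x0: "0 \<le> 2*C*(\<Sum>i\<in>active_set K yl yr. (xib i - xi1 i)^2)" using C by (simp add: sum_nonneg)
  have nu: "norm (u - w1) = norm (w1 - u)" by (rule norm_minus_commute)
  have L: "(\<Sum>i=1..K-1. (ord_loss K x yl yr w0 th0 i)^2) \<le> (1 + 1/(2*C) + (norm x)^2 * real (card (active_set K yl yr))) * (2 * ?o1)"
    using y by (intro loss_bound[OF C _ _ f1]) auto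
  show ?thesis
  proof (intro exI conjI)
    show "0 \<le> 2 * ?o1" using obj_nonneg[OF C] by simp
    show "(\<Sum>i=1..K-1. (ord_loss K x yl yr w0 th0 i)^2) \<le> (1 + 1/(2*C) + (norm x)^2 * real (card (active_set K yl yr))) * (2 * ?o1)"
      by (rule L)
    show "2 * ?o1 \<le> (norm (w0 - u))^2 + (\<Sum>i=1..K-1. (th0 i - b i)^2) - (norm (w1 - u))^2 - (\<Sum>i=1..K-1. (th1 i - b i)^2)
            + 2*C*(\<Sum>i=1..K-1. (ord_loss K x yl yr u b i)^2)"
      using lin_aux[OF p[unfolded ob s1 nu] x0] .
  qed
qed


theorem theorem6:
  fixes xs :: "nat \<Rightarrow> real^'d" and yl yr :: "nat \<Rightarrow> nat"
    and K T :: nat and C :: real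
    and u :: "real^'d" and b :: "nat \<Rightarrow> real"
  assumes "C > 0" and "T \<ge> 1"
    and "\<forall>t\<in>{1..T}. 1 \<le> yl t \<and> yl t \<le> yr t \<and> yr t \<le> K"
  defines "c \<equiv> Min ((\<lambda>t. yr t - yl t) ` {1..T})"
    and "R2 \<equiv> Max ((\<lambda>t. (norm (xs t))^2) ` {1..T})"
  defines "D \<equiv> 1 + 1 / (2 * C) + R2 * (real K - real c - 1)"
  shows "(\<Sum>t=1..T. \<Sum>i=1..K-1.
            (ord_loss K (xs t) (yl t) (yr t)
               (fst (pa2_run C K xs yl yr (t - 1))) (snd (pa2_run C K xs yl yr (t - 1))) i)^2)
         \<le> D * ((norm u)^2 + thr_sqnorm K b
                + 2 * C * (\<Sum>t=1..T. \<Sum>i=1..K-1. (ord_loss K (xs t) (yl t) (yr t) u b i)^2))"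
proof -
  note Cp = assms(1)
  define V where "V n = (norm (fst (pa2_run C K xs yl yr n) - u))^2 + (\<Sum>i=1..K-1. (snd (pa2_run C K xs yl yr n) i - b i)^2)" for n
  define Lt where "Lt t = (\<Sum>i=1..K-1. (ord_loss K (xs t) (yl t) (yr t) (fst (pa2_run C K xs yl yr (t - 1))) (snd (pa2_run C K xs yl yr (t - 1))) i)^2)" for t
  define Ls where "Ls t = (\<Sum>i=1..K-1. (ord_loss K (xs t) (yl t) (yr t) u b i)^2)" for t
  have cle: "c \<le> yr t - yl t" if "t \<in> {1..T}" for t
    unfolding c_def using that by (intro Min_le) auto
  have Rle: "(norm (xs t))^2 \<le> R2" if "t \<in> {1..T}" for t
    unfolding R2_def using that by (intro Max_ge) auto
  have T1: "1 \<in> {1..T}" using assms(2) by simp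
  have R20: "0 \<le> R2" using Rle[OF T1] by (meson order_trans zero_le_power2)
  have cardK: "real (card (active_set K (yl t) (yr t))) \<le> real K - real c - 1" if "t \<in> {1..T}" for t
  proof -
    have "card (active_set K (yl t) (yr t)) + (yr t - yl t) + 1 \<le> K"
      using assms(3) that by (intro card_active) auto
    then have "card (active_set K (yl t) (yr t)) + c + 1 \<le> K" using cle[OF that] by linarith
    then have "real (card (active_set K (yl t) (yr t)) + c + 1) \<le> real K" by (simp only: of_nat_le_iff)
    then show ?thesis by simp
  qed
  have Kc: "0 \<le> real K - real c - 1" using cardK[OF T1] by (meson of_nat_0_le_iff order_trans)
  have D0: "0 \<le> D" unfolding D_def using Cp R20 Kc by (intro add_nonneg_nonneg) auto
  have step: "Lt (Suc n) \<le> D * (V n - V (Suc n) + 2*C*Ls (Suc n))" if "Suc n \<le> T" for n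
  proof -
    have tT: "Suc n \<in> {1..T}" using that by simp
    have y: "1 \<le> yl (Suc n)" "yl (Suc n) \<le> yr (Suc n)" "yr (Suc n) \<le> K" using assms(3) tT by auto
    have upd: "pa2_is_update C K (xs (Suc n)) (yl (Suc n)) (yr (Suc n)) (fst (pa2_run C K xs yl yr n)) (snd (pa2_run C K xs yl yr n))
       (fst (pa2_run C K xs yl yr (Suc n))) (snd (pa2_run C K xs yl yr (Suc n)))"
      unfolding pa2_run.simps(2) by (rule step_is_update[OF Cp y])
    obtain q where q0: "0 \<le> q"
      and qL: "Lt (Suc n) \<le> (1 + 1/(2*C) + (norm (xs (Suc n)))^2 * real (card (active_set K (yl (Suc n)) (yr (Suc n))))) * q"
      and qV: "q \<le> V n - V (Suc n) + 2*C*Ls (Suc n)"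
      using step_bound[OF Cp y upd, of u b] unfolding Lt_def V_def Ls_def by auto
    have "(norm (xs (Suc n)))^2 * real (card (active_set K (yl (Suc n)) (yr (Suc n)))) \<le> R2 * (real K - real c - 1)"
      using Rle[OF tT] cardK[OF tT] R20 by (intro mult_mono) auto
    hence Dt: "1 + 1/(2*C) + (norm (xs (Suc n)))^2 * real (card (active_set K (yl (Suc n)) (yr (Suc n)))) \<le> D"
      unfolding D_def by linarith
    have "Lt (Suc n) \<le> D * q" using qL Dt q0 by (meson mult_right_mono order_trans)
    also have "\<dots> \<le> D * (V n - V (Suc n) + 2*C*Ls (Suc n))" using qV D0 by (rule mult_left_mono)
    finally show ?thesis .
  qed
  have tele: "n \<le> T \<Longrightarrow> (\<Sum>t=1..n. Lt t) \<le> D * (V 0 - V n + 2*C*(\<Sum>t=1..n. Ls t))" for n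
  proof (induction n)
    case 0 then show ?case by simp
  next
    case (Suc n)
    have "(\<Sum>t=1..Suc n. Lt t) = (\<Sum>t=1..n. Lt t) + Lt (Suc n)" by simp
    also have "\<dots> \<le> D * (V 0 - V n + 2*C*(\<Sum>t=1..n. Ls t)) + D * (V n - V (Suc n) + 2*C*Ls (Suc n))"
      using Suc.IH Suc.prems step[OF Suc.prems] by (intro add_mono) auto
    also have "\<dots> = D * (V 0 - V (Suc n) + 2*C*(\<Sum>t=1..Suc n. Ls t))"
      by (simp add: algebra_simps)
    finally show ?case .
  qed
  have V0: "V 0 = (norm u)^2 + thr_sqnorm K b"
    unfolding V_def thr_sqnorm_def by (simp add: power2_commute)
  have VT: "0 \<le> V T" unfolding V_def by (intro add_nonneg_nonneg sum_nonneg) auto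
  have "(\<Sum>t=1..T. Lt t) \<le> D * (V 0 - V T + 2*C*(\<Sum>t=1..T. Ls t))" by (rule tele) simp
  also have "\<dots> \<le> D * (V 0 + 2*C*(\<Sum>t=1..T. Ls t))" using VT D0 by (intro mult_left_mono) auto
  finally show ?thesis unfolding V0 Lt_def Ls_def .
qed

end
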